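(* Let $n\ge 3$ be an integer. (i) There exist a function $f:\mathbb{R}\to\mathbb{R}$ and a point $x$ such that the Peano derivative $f_{(n-1)}(x)$ exists and the $n$th symmetric Riemann derivative $D_n^sf(x)$ exists, but the Peano derivative $f_{(n)}(x)$ does not exist. (ii) There exist a function $f:\mathbb{R}\to\mathbb{R}$ and a point $x$ such that $f_{(2)}(x)$ exists and the third forward Riemann derivative $D_3f(x)$ exists, but $f_{(3)}(x)$ does not exist. *)

theory Defs
  imports "HOL-Analysis.Analysis"
begin

definition peano_deriv_exists :: "(real \<Rightarrow> real) \<Rightarrow> real \<Rightarrow> nat \<Rightarrow> bool" where
  "peano_deriv_exists f x k \<longleftrightarrow>
     (\<exists>a :: nat \<Rightarrow> real. a 0 = f x \<and>
        ((\<lambda>h. (f (x + h) - (\<Sum>j\<le>k. a j * h ^ j / fact j)) / h ^ k) \<longlongrightarrow> 0) (at 0))"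

definition sym_riemann_diff :: "nat \<Rightarrow> (real \<Rightarrow> real) \<Rightarrow> real \<Rightarrow> real \<Rightarrow> real" where
  "sym_riemann_diff n f x h =
     (\<Sum>i\<le>n. (-1) ^ i * real (n choose i) * f (x + (real n / 2 - real i) * h))"

definition sym_riemann_deriv_exists :: "nat \<Rightarrow> (real \<Rightarrow> real) \<Rightarrow> real \<Rightarrow> bool" where
  "sym_riemann_deriv_exists n f x \<longleftrightarrow>
     (\<exists>L. ((\<lambda>h. sym_riemann_diff n f x h / h ^ n) \<longlongrightarrow> L) (at 0))"

definition fwd_riemann_diff :: "nat \<Rightarrow> (real \<Rightarrow> real) \<Rightarrow> real \<Rightarrow> real \<Rightarrow> real" where
  "fwd_riemann_diff n f x h =
     (\<Sum>i\<le>n. (-1) ^ i * real (n choose i) * f (x + real (n - i) * h))"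

definition fwd_riemann_deriv_exists :: "nat \<Rightarrow> (real \<Rightarrow> real) \<Rightarrow> real \<Rightarrow> bool" where
  "fwd_riemann_deriv_exists n f x \<longleftrightarrow>
     (\<exists>L. ((\<lambda>h. fwd_riemann_diff n f x h / h ^ n) \<longlongrightarrow> L) (at 0))"

end

theory Submission
  imports Defs
begin


lemma poly_o:
  fixes c :: "nat \<Rightarrow> real"
  assumes "((\<lambda>h. (\<Sum>j\<le>m. c j * h^j) / h^m) \<longlongrightarrow> 0) (at 0)"
  shows "\<forall>j\<le>m. c j = 0"
  using assms
proof (induction m arbitrary: c)
  case 0
  then have "((\<lambda>h. c 0) \<longlongrightarrow> 0) (at (0::real))" by simp
  then have "c 0 = 0" using tendsto_const tendsto_unique trivial_limit_at by blast
  then show ?case by simp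
next
  case (Suc m)
  define R where "R h = (\<Sum>j\<le>m. c (Suc j) * h^j)" for h :: real
  have sum_eq: "(\<Sum>j\<le>Suc m. c j * h^j) = c 0 + h * R h" for h
    unfolding R_def by (simp only: sum.atMost_Suc_shift) (simp add: sum_distrib_left algebra_simps)
  have "((\<lambda>h. (\<Sum>j\<le>Suc m. c j * h^j) / h^Suc m * h^Suc m) \<longlongrightarrow> 0 * 0^Suc m) (at 0)"
    by (intro tendsto_mult Suc.prems tendsto_power tendsto_ident_at)
  then have "((\<lambda>h. (\<Sum>j\<le>Suc m. c j * h^j) / h^Suc m * h^Suc m) \<longlongrightarrow> 0) (at 0)" by simp
  then have "((\<lambda>h. c 0 + h * R h) \<longlongrightarrow> 0) (at 0)"
    apply (rule Lim_transform_eventually)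
    apply (auto simp: eventually_at_filter sum_eq simp del: sum.atMost_Suc)
    done
  moreover have "((\<lambda>h. c 0 + h * R h) \<longlongrightarrow> c 0 + 0 * R 0) (at 0)"
    unfolding R_def by (intro tendsto_intros)
  ultimately have c0: "c 0 = 0" using tendsto_unique trivial_limit_at by fastforce
  have "((\<lambda>h. (\<Sum>j\<le>m. c (Suc j) * h^j) / h^m) \<longlongrightarrow> 0) (at 0)"
    using Suc.prems
    apply (rule Lim_transform_eventually)
    apply (auto simp: eventually_at_filter sum_eq c0 R_def simp del: sum.atMost_Suc)
    done
  from Suc.IH[OF this] c0 show ?case
    by (metis le_eq_less_or_eq less_Suc_eq_0_disj not_less_eq_eq)
qed

lemma peano_next:
  fixes f :: "real \<Rightarrow> real"
  assumes "peano_deriv_exists f 0 (Suc m)" "((\<lambda>h. f h / h^m) \<longlongrightarrow> 0) (at 0)"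
  shows "\<exists>c. ((\<lambda>h. f h / h^Suc m) \<longlongrightarrow> c) (at 0)"
proof -
  obtain a where lim: "((\<lambda>h. (f h - (\<Sum>j\<le>Suc m. a j * h ^ j / fact j)) / h ^ Suc m) \<longlongrightarrow> 0) (at 0)"
    using assms(1) unfolding peano_deriv_exists_def by auto
  define P where "P h = (\<Sum>j\<le>Suc m. a j * h ^ j / fact j)" for h :: real
  define k where "k = a (Suc m) / fact (Suc m)"
  define Q where "Q h = (\<Sum>j\<le>m. (a j / fact j) * h ^ j)" for h :: real
  have PQ: "P h = Q h + k * h ^ Suc m" for h
    unfolding P_def Q_def k_def by (simp add: field_simps)
  have "((\<lambda>h. (f h - P h) / h ^ Suc m * h) \<longlongrightarrow> 0 * 0) (at 0)"
    using lim unfolding P_def by (intro tendsto_mult tendsto_ident_at)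
  then have "((\<lambda>h. (f h - P h) / h ^ m) \<longlongrightarrow> 0) (at 0)"
    apply simp
    apply (rule Lim_transform_eventually)
    apply (auto simp: eventually_at_filter field_simps)
    done
  from tendsto_diff[OF assms(2) this]
  have "((\<lambda>h. f h / h ^ m - (f h - P h) / h ^ m) \<longlongrightarrow> 0) (at 0)" by simp
  then have "((\<lambda>h. P h / h ^ m) \<longlongrightarrow> 0) (at 0)"
    by (rule Lim_transform_eventually) (auto simp: eventually_at_filter field_simps)
  from tendsto_diff[OF this tendsto_mult[OF tendsto_const[of k] tendsto_ident_at[of 0 UNIV]]]
  have "((\<lambda>h. P h / h ^ m - k * h) \<longlongrightarrow> 0) (at 0)" by simp
  then have "((\<lambda>h. Q h / h ^ m) \<longlongrightarrow> 0) (at 0)"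
    by (rule Lim_transform_eventually) (auto simp: eventually_at_filter field_simps PQ)
  then have "\<forall>j\<le>m. a j / fact j = 0" unfolding Q_def by (rule poly_o)
  then have Q0: "Q h = 0" for h unfolding Q_def by simp
  from tendsto_add[OF lim tendsto_const[of k]]
  have "((\<lambda>h. (f h - P h) / h ^ Suc m + k) \<longlongrightarrow> k) (at 0)" unfolding P_def by simp
  then have "((\<lambda>h. f h / h ^ Suc m) \<longlongrightarrow> k) (at 0)"
    by (rule Lim_transform_eventually) (auto simp: eventually_at_filter field_simps PQ Q0)
  then show ?thesis by blast
qed

lemma sym_zero:
  fixes g :: "real \<Rightarrow> real"
  assumes odd: "\<And>t. (-1)^n * g (-t) = - g t"
  shows "sym_riemann_diff n g 0 h = 0"
proof -
  define T where "T i = (-1) ^ i * real (n choose i) * g (0 + (real n / 2 - real i) * h)" for i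
  have S: "sym_riemann_diff n g 0 h = (\<Sum>i\<le>n. T i)" unfolding sym_riemann_diff_def T_def by simp
  have "(\<Sum>i\<le>n. T i) = (\<Sum>i\<le>n. T (n - i))"
    by (rule sum.reindex_bij_witness[where i="\<lambda>i. n - i" and j="\<lambda>i. n - i"]) auto
  also have "\<dots> = (\<Sum>i\<le>n. - T i)"
  proof (rule sum.cong[OF refl])
    fix i assume "i \<in> {..n}"
    then have i: "i \<le> n" by simp
    have pw: "(-1::real) ^ (n - i) = (-1) ^ n * (-1) ^ i"
    proof -
      have e: "n + i = (n - i) + 2*i" using i by simp
      have "(-1::real)^n * (-1)^i = (-1)^(n+i)" by (simp add: power_add)
      also have "\<dots> = (-1)^(n-i)" by (subst e) (simp add: power_add power_mult)
      finally show ?thesis by simp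
    qed
    have arg: "(real n / 2 - real (n - i)) * h = - ((real n / 2 - real i) * h)" using i by (simp add: of_nat_diff field_simps)
    have "T (n - i) = (-1) ^ i * real (n choose i) * ((-1)^n * g ((real n / 2 - real (n - i)) * h))"
      unfolding T_def using i by (simp add: pw binomial_symmetric[OF i, symmetric] mult_ac)
    also have "\<dots> = (-1) ^ i * real (n choose i) * ((-1)^n * g (- ((real n / 2 - real i) * h)))"
      by (simp only: arg)
    also have "\<dots> = - T i" unfolding T_def by (simp add: odd)
    finally show "T (n - i) = - T i" .
  qed
  also have "\<dots> = - (\<Sum>i\<le>n. T i)" by (simp add: sum_negf)
  finally show ?thesis using S by simp
qed

lemma part1:
  fixes n :: nat
  assumes "n \<ge> 3"
  shows "\<exists>(f :: real \<Rightarrow> real) x. peano_deriv_exists f x (n - 1) \<and> sym_riemann_deriv_exists n f x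
              \<and> \<not> peano_deriv_exists f x n"
proof -
  define f where "f t = t ^ (n - 1) * \<bar>t\<bar>" for t :: real
  obtain m where m: "n = Suc m" using assms by (cases n) auto
  have lim1: "((\<lambda>h. f h / h ^ m) \<longlongrightarrow> 0) (at 0)"
  proof -
    have "((\<lambda>h. \<bar>h\<bar>) \<longlongrightarrow> (0::real)) (at 0)" using tendsto_rabs[OF tendsto_ident_at[of "0::real" UNIV]] by simp
    then show ?thesis
      by (rule Lim_transform_eventually) (auto simp: eventually_at_filter f_def m)
  qed
  have P1: "peano_deriv_exists f 0 (n - 1)"
    unfolding peano_deriv_exists_def
    by (rule exI[of _ "\<lambda>_. 0"]) (use lim1 in \<open>simp add: m f_def\<close>)
  have odd: "(-1)^n * f (-t) = - f t" for t
  proof -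
    have "(-1::real)^n * (-1)^(n-1) = -1" using m by (simp add: power_add[symmetric])
    then show ?thesis unfolding f_def m by (simp add: power_minus')
  qed
  have S: "sym_riemann_deriv_exists n f 0"
    unfolding sym_riemann_deriv_exists_def using sym_zero[of n f, OF odd] by auto
  have NP: "\<not> peano_deriv_exists f 0 n"
  proof
    assume "peano_deriv_exists f 0 n"
    then obtain c where c: "((\<lambda>h. f h / h ^ Suc m) \<longlongrightarrow> c) (at 0)"
      using peano_next[of f m] lim1 m by auto
    have r: "((\<lambda>h. f h / h ^ Suc m) \<longlongrightarrow> 1) (at_right 0)"
      by (rule Lim_transform_eventually[OF tendsto_const])
         (auto simp: eventually_at_filter f_def m eventually_at_right_field intro: exI[of _ 1])
    have l: "((\<lambda>h. f h / h ^ Suc m) \<longlongrightarrow> -1) (at_left 0)"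
      by (rule Lim_transform_eventually[OF tendsto_const])
         (auto simp: eventually_at_filter f_def m eventually_at_left_field intro: exI[of _ "-1"])
    have "c = 1" using tendsto_unique[OF _ tendsto_mono[OF at_le[of "{0<..}"] c] r] by auto
    moreover have "c = -1" using tendsto_unique[OF _ tendsto_mono[OF at_le[of "{..<0}"] c] l] by auto
    ultimately show False by simp
  qed
  show ?thesis using P1 S NP by blast
qed



lemma pow23_nat: "(2::nat)^p = 3^q \<Longrightarrow> p = 0 \<and> q = 0"
proof -
  assume h: "(2::nat)^p = 3^q"
  have "odd ((3::nat)^q)" by simp
  moreover have "even ((2::nat)^p) \<longleftrightarrow> p > 0" by (simp add: even_power)
  ultimately have "p = 0" using h by auto
  moreover from this h have "(3::nat)^q = Suc 0" by simp
  ultimately show ?thesis by (simp del: nat_power_eq_Suc_0_iff add: nat_power_eq_Suc_0_iff[of 3 q])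
qed

lemma pow23_real: "(2::real)^p = 3^q \<Longrightarrow> p = 0 \<and> q = 0"
  by (rule pow23_nat) (metis of_nat_eq_iff of_nat_numeral of_nat_power)

lemma pow23_int: "(2::real) powi p = 3 powi q \<Longrightarrow> p = 0 \<and> q = 0"
proof -
  assume h: "(2::real) powi p = 3 powi q"
  show ?thesis
  proof (cases "p \<ge> 0")
    case p: True
    show ?thesis
    proof (cases "q \<ge> 0")
      case True
      then show ?thesis using h p pow23_real[of "nat p" "nat q"] by (simp add: power_int_def)
    next
      case False
      have "(2::real)^nat p \<ge> 1" by simp
      moreover have "(3::real)^nat (-q) > 1" using False by (intro one_less_power) auto
      ultimately have "(2::real)^nat p * 3^nat (-q) > 1"
        by (smt (verit) mult_le_cancel_right1)
      then show ?thesis using h p False by (simp add: power_int_def field_simps)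
    qed
  next
    case p: False
    show ?thesis
    proof (cases "q \<ge> 0")
      case True
      have "(3::real)^nat q \<ge> 1" by simp
      moreover have "(2::real)^nat (-p) > 1" using p by (intro one_less_power) auto
      ultimately have "(3::real)^nat q * 2^nat (-p) > 1"
        by (smt (verit) mult_le_cancel_right1)
      then show ?thesis using h p True by (simp add: power_int_def field_simps)
    next
      case False
      then show ?thesis using h p pow23_real[of "nat (-p)" "nat (-q)"] by (simp add: power_int_def power_one_over)
    qed
  qed
qed

lemma orb_unique:
  assumes "(2::real) powi a * 3 powi b = 2 powi a' * 3 powi b'"
  shows "a = a' \<and> b = b'"
proof -
  have "(2::real) powi (a - a') = 3 powi (b' - b)"
    using assms by (simp add: power_int_diff field_simps)
  from pow23_int[OF this] show ?thesis by simp
qed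



definition orb :: "real \<Rightarrow> bool" where
  "orb h \<longleftrightarrow> (\<exists>a b::int. h = -(2 powi a * 3 powi b))"
definition cx :: complex where "cx = Complex 3 (sqrt 23)"
definition cy :: complex where "cy = Complex 6 (3 * sqrt 23)"
definition G :: "(complex \<Rightarrow> real) \<Rightarrow> real \<Rightarrow> real" where
  "G \<phi> h = (if orb h then \<phi> (case (THE p. h = -(2 powi fst p * 3 powi snd p)) of (a, b) \<Rightarrow> cx powi a * cy powi b) else 0)"

lemma G_orb: "G \<phi> (-(2 powi a * 3 powi b)) = \<phi> (cx powi a * cy powi b)"
proof -
  have "(THE p. -((2::real) powi a * 3 powi b) = -(2 powi fst p * 3 powi snd p)) = (a, b)"
    apply (rule the_equality)
     apply simp
    apply clarsimp
    apply (drule orb_unique)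
    apply auto
    done
  then show ?thesis unfolding G_def orb_def by auto
qed

lemma G_not: "\<not> orb h \<Longrightarrow> G \<phi> h = 0" unfolding G_def by simp

lemma orb_neg: "orb h \<Longrightarrow> h < 0" unfolding orb_def by auto

lemma orb2: "orb (2 * h) \<longleftrightarrow> orb h"
proof
  assume "orb (2*h)"
  then obtain a b where "2 * h = -(2 powi a * 3 powi b)" unfolding orb_def by auto
  then have "h = -(2 powi (a - 1) * 3 powi b)" by (simp add: power_int_diff field_simps)
  then show "orb h" unfolding orb_def by blast
next
  assume "orb h"
  then obtain a b where "h = -(2 powi a * 3 powi b)" unfolding orb_def by auto
  then have "2 * h = -(2 powi (a + 1) * 3 powi b)" by (simp add: power_int_add field_simps)
  then show "orb (2*h)" unfolding orb_def by blast
qed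

lemma orb3: "orb (3 * h) \<longleftrightarrow> orb h"
proof
  assume "orb (3*h)"
  then obtain a b where "3 * h = -(2 powi a * 3 powi b)" unfolding orb_def by auto
  then have "h = -(2 powi a * 3 powi (b - 1))" by (simp add: power_int_diff field_simps)
  then show "orb h" unfolding orb_def by blast
next
  assume "orb h"
  then obtain a b where "h = -(2 powi a * 3 powi b)" unfolding orb_def by auto
  then have "3 * h = -(2 powi a * 3 powi (b + 1))" by (simp add: power_int_add field_simps)
  then show "orb (3*h)" unfolding orb_def by blast
qed

lemma kernel:
  assumes phi: "\<phi> = Re \<or> \<phi> = Im"
  shows "G \<phi> (3 * h) - 3 * G \<phi> (2 * h) + 3 * G \<phi> h = 0"
proof (cases "orb h")
  case False
  then show ?thesis using orb2 orb3 G_not by simp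
next
  case True
  then obtain a b where h: "h = -(2 powi a * 3 powi b)" unfolding orb_def by auto
  define V where "V = cx powi a * cy powi b"
  have h2: "2 * h = -(2 powi (a + 1) * 3 powi b)" using h by (simp add: power_int_add field_simps)
  have h3: "3 * h = -(2 powi a * 3 powi (b + 1))" using h by (simp add: power_int_add field_simps)
  have cx0: "cx \<noteq> 0" and cy0: "cy \<noteq> 0" unfolding cx_def cy_def by (auto simp: complex_eq_iff)
  have V2: "cx powi (a + 1) * cy powi b = cx * V" unfolding V_def using cx0 by (simp add: power_int_add)
  have V3: "cx powi a * cy powi (b + 1) = cy * V" unfolding V_def using cy0 by (simp add: power_int_add)
  have lin: "cy - 3 * cx + 3 = 0" unfolding cx_def cy_def by (simp add: complex_eq_iff)
  have z: "cy * V - 3 * (cx * V) + 3 * V = 0"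
    using lin by (metis (no_types) distrib_right left_diff_distrib' mult_zero_left mult.assoc)
  have g1: "G \<phi> h = \<phi> V" unfolding h V_def G_orb ..
  have g2: "G \<phi> (2 * h) = \<phi> (cx * V)" unfolding h2 G_orb V2 ..
  have g3: "G \<phi> (3 * h) = \<phi> (cy * V)" unfolding h3 G_orb V3 ..
  show ?thesis
    unfolding g1 g2 g3
    using phi z by (auto simp: complex_eq_iff)
qed

lemma fwd3: "fwd_riemann_diff 3 g 0 h = g (3 * h) - 3 * g (2 * h) + 3 * g h - g 0"
  by (simp add: fwd_riemann_diff_def numeral_3_eq_3 atMost_Suc)



lemma pwswap: "((u::real) powi a) ^ k = (u ^ k) powi a"
  by (simp add: power_int_power' power_int_power mult.commute)

lemma normV: "(cmod (cx powi a * cy powi b))^2 = (2 powi a * 3 powi b)^5"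
proof -
  have x: "cmod cx ^ 2 = 32" unfolding cx_def cmod_power2 by simp
  have y: "cmod cy ^ 2 = 243" unfolding cy_def cmod_power2 by (simp add: power_mult_distrib)
  have "(cmod (cx powi a * cy powi b))^2 = (cmod cx powi a)^2 * (cmod cy powi b)^2"
    by (simp add: norm_mult norm_power_int power_mult_distrib)
  also have "\<dots> = 32 powi a * 243 powi b" by (simp add: pwswap x y)
  also have "\<dots> = (2 powi a * 3 powi b)^5" by (simp add: power_mult_distrib pwswap)
  finally show ?thesis .
qed

lemma G_sq_le: assumes "\<phi> = Re \<or> \<phi> = Im" shows "(G \<phi> h)^2 \<le> \<bar>h\<bar>^5"
proof (cases "orb h")
  case False then show ?thesis by (simp add: G_not)
next
  case True
  then obtain a b where h: "h = -(2 powi a * 3 powi b)" unfolding orb_def by auto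
  have "\<bar>\<phi> (cx powi a * cy powi b)\<bar> \<le> cmod (cx powi a * cy powi b)"
    using assms abs_Re_le_cmod abs_Im_le_cmod by auto
  then have "(\<phi> (cx powi a * cy powi b))^2 \<le> (cmod (cx powi a * cy powi b))^2"
    by (metis abs_ge_zero power2_abs power_mono)
  also have "\<dots> = \<bar>h\<bar>^5" unfolding normV h by simp
  finally show ?thesis unfolding h G_orb .
qed

lemma G_sq_eq: assumes "orb h" shows "(G Re h)^2 + (G Im h)^2 = \<bar>h\<bar>^5"
proof -
  obtain a b where h: "h = -(2 powi a * 3 powi b)" using assms unfolding orb_def by auto
  have e: "\<bar>h\<bar> = 2 powi a * 3 powi b" using h by simp
  show ?thesis unfolding e unfolding h G_orb normV[symmetric] cmod_power2 by (rule refl)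
qed



lemma G0: "G \<phi> 0 = 0" using orb_neg G_not by force

lemma G_small: assumes "\<phi> = Re \<or> \<phi> = Im" shows "((\<lambda>h. G \<phi> h / h^2) \<longlongrightarrow> 0) (at 0)"
proof (rule Lim_null_comparison)
  show "((\<lambda>h. sqrt \<bar>h\<bar>) \<longlongrightarrow> 0) (at (0::real))"
    using tendsto_real_sqrt[OF tendsto_rabs[OF tendsto_ident_at[of "0::real" UNIV]]] by simp
  show "\<forall>\<^sub>F h in at 0. norm (G \<phi> h / h^2) \<le> sqrt \<bar>h\<bar>"
  proof (rule eventually_at_filter[THEN iffD2], rule always_eventually, intro allI impI)
    fix h :: real assume "h \<noteq> 0"
    have "(G \<phi> h / h^2)^2 = (G \<phi> h)^2 / \<bar>h\<bar>^4" by (simp add: power_divide power_even_abs_numeral flip: power_mult)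
    also have "\<dots> \<le> \<bar>h\<bar>^5 / \<bar>h\<bar>^4" by (intro divide_right_mono G_sq_le assms) simp
    also have "\<dots> = \<bar>h\<bar>" using \<open>h \<noteq> 0\<close> power_diff[of "\<bar>h\<bar>" 4 5] by simp
    finally have "(G \<phi> h / h^2)^2 \<le> \<bar>h\<bar>" .
    then have "sqrt ((G \<phi> h / h^2)^2) \<le> sqrt \<bar>h\<bar>" by (rule real_sqrt_le_mono)
    then show "norm (G \<phi> h / h^2) \<le> sqrt \<bar>h\<bar>" by simp
  qed
qed

lemma G_P2: assumes "\<phi> = Re \<or> \<phi> = Im" shows "peano_deriv_exists (G \<phi>) 0 2"
  unfolding peano_deriv_exists_def
  by (rule exI[of _ "\<lambda>_. 0"]) (use G_small[OF assms] in \<open>simp add: G0\<close>)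

lemma G_F3: assumes "\<phi> = Re \<or> \<phi> = Im" shows "fwd_riemann_deriv_exists 3 (G \<phi>) 0"
  unfolding fwd_riemann_deriv_exists_def fwd3 using kernel[OF assms] G0
  by (auto intro!: exI[of _ 0])

lemma G_P3: assumes "\<phi> = Re \<or> \<phi> = Im" "peano_deriv_exists (G \<phi>) 0 3"
  shows "((\<lambda>h. G \<phi> h / h^3) \<longlongrightarrow> 0) (at 0)"
proof -
  obtain c where c: "((\<lambda>h. G \<phi> h / h^3) \<longlongrightarrow> c) (at 0)"
    using peano_next[of "G \<phi>" 2] assms G_small[OF assms(1)] by (auto simp: numeral_3_eq_3)
  have z: "G \<phi> y = 0" if "y > 0" for y using that orb_neg G_not by force
  have r: "((\<lambda>h. G \<phi> h / h^3) \<longlongrightarrow> 0) (at_right 0)"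
    by (rule Lim_transform_eventually[OF tendsto_const])
       (auto simp: eventually_at_right_field z intro: exI[of _ 1])
  have "c = 0" using tendsto_unique[OF _ tendsto_mono[OF at_le[of "{0<..}"] c] r] by auto
  then show ?thesis using c by simp
qed

lemma part2:
  "\<exists>(f :: real \<Rightarrow> real) x. peano_deriv_exists f x 2 \<and> fwd_riemann_deriv_exists 3 f x
              \<and> \<not> peano_deriv_exists f x 3"
proof (rule ccontr)
  assume "\<not> ?thesis"
  then have p: "peano_deriv_exists (G \<phi>) 0 3" if "\<phi> = Re \<or> \<phi> = Im" for \<phi>
    using G_P2[OF that] G_F3[OF that] by blast
  have "((\<lambda>h. (G Re h / h^3)^2 + (G Im h / h^3)^2) \<longlongrightarrow> 0^2 + 0^2) (at 0)"
    by (intro tendsto_intros G_P3 p) auto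
  then have "\<forall>\<^sub>F h in at 0. (G Re h / h^3)^2 + (G Im h / h^3)^2 < 1"
    by (intro order_tendstoD(2)) auto
  then obtain d where d: "d > 0" and D: "\<And>h. h \<noteq> 0 \<Longrightarrow> dist h 0 < d \<Longrightarrow> (G Re h / h^3)^2 + (G Im h / h^3)^2 < 1"
    unfolding eventually_at by blast
  obtain k where k: "(1/2::real)^k < d" using real_arch_pow_inv[OF d, of "1/2"] by auto
  define h :: real where "h = -(2 powi (- int k) * 3 powi 0)"
  have o: "orb h" unfolding orb_def h_def by blast
  have ah: "\<bar>h\<bar> = (1/2)^k" unfolding h_def by (simp add: power_int_minus power_one_over inverse_eq_divide)
  have hnz: "h \<noteq> 0" using ah by auto
  have "(G Re h / h^3)^2 + (G Im h / h^3)^2 = \<bar>h\<bar>^5 / \<bar>h\<bar>^6"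
    using G_sq_eq[OF o] by (simp add: power_divide power_even_abs_numeral flip: power_mult add_divide_distrib)
  also have "\<dots> = 1 / \<bar>h\<bar>" using hnz power_diff[of "\<bar>h\<bar>" 5 6] by (simp add: divide_simps mult.commute)
  also have "\<dots> = 2^k" unfolding ah by (simp add: power_one_over)
  also have "\<dots> \<ge> 1" by simp
  finally have "(G Re h / h^3)^2 + (G Im h / h^3)^2 \<ge> 1" .
  moreover have "dist h 0 < d" using ah k by simp
  ultimately show False using D[OF hnz] by fastforce
qed


theorem theorem1:
  fixes n :: nat
  assumes "n \<ge> 3"
  shows "(\<exists>(f :: real \<Rightarrow> real) x. peano_deriv_exists f x (n - 1) \<and> sym_riemann_deriv_exists n f x
              \<and> \<not> peano_deriv_exists f x n)
       \<and> (\<exists>(f :: real \<Rightarrow> real) x. peano_deriv_exists f x 2 \<and> fwd_riemann_deriv_exists 3 f x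
              \<and> \<not> peano_deriv_exists f x 3)"
  using part1[OF assms] part2 by blast

end
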